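(* Let $d\ge1$, $m=2^d$, and $x\in[0,\infty)^m$ with first positive index $i^*$. Then $\mathrm{SPiRiT}_\infty(x)=S\,P\,i_\infty\big(R\, i_\infty(Tx)\big)\in\{0,1\}^d$ is the binary representation of $i^*-1$ if $i^*\ge1$, and is the zero vector if $i^*=0$.
   Context: Let $m=2^d$. Consider the complete binary tree with nodes indexed $1,\dots,2m-1$: node $1$ is the root, node $k\in[m-1]$ has left child $2k$ and right child $2k+1$; leaf number $i\in[m]$ is node $m+i-1$. For $i\in[m]$ let $\mathrm{Anc}(i)=\{\lfloor (m+i-1)/2^h\rfloor: h=0,\dots,d\}$ and $\mathrm{Lop}(i)=\{k-1: k\in \mathrm{Anc}(i),\ k\text{ odd},\ k\ge 3\}$. Tree matrix $T\in\{0,1\}^{(2m-1)\times m}$: $T(k,i)=1$ iff $k\in\mathrm{Anc}(i)$. Roots matrix $R\in\{0,1\}^{m\times(2m-1)}$: for $j\in[m-1]$, $R(j,k)=1$ iff $k\in\mathrm{Lop}(j+1)$; row $m$ of $R$ is the indicator vector of $\{1\}$. Pairwise matrix $P\in\{-1,0,1\}^{m\times m}$: $(Pu)(1)=u(1)$ and $(Pu)(k)=u(k)-u(k-1)$ for $k\ge 2$. Sketch matrix $S\in\{0,1\}^{d\times m}$: $S(h,k)$ is the $h$-th bit (coefficient of $2^{h-1}$) of $k-1$. For a real vector $y$, $i_\infty(y)$ is the $0/1$ vector with entry $1$ exactly where $y$ is nonzero. The first positive index of $x\in[0,\infty)^m$ is the smallest $i\in[m]$ with $x(i)>0$, or $0$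 if $x=0$. "Binary representation of $n$" means the vector whose $h$-th entry is the coefficient of $2^{h-1}$ in $n$. *)

theory Defs
  imports Complex_Main
begin

text \<open>Vectors are functions nat => real indexed from 1; matrices are functions
  nat => nat => real indexed from 1. Dimensions are carried explicitly.\<close>

definition mat_vec :: "(nat \<Rightarrow> nat \<Rightarrow> real) \<Rightarrow> nat \<Rightarrow> (nat \<Rightarrow> real) \<Rightarrow> nat \<Rightarrow> real" where
  "mat_vec A n v = (\<lambda>k. \<Sum>j=1..n. A k j * v j)"

definition i_inf :: "(nat \<Rightarrow> real) \<Rightarrow> nat \<Rightarrow> real" where
  "i_inf y = (\<lambda>k. if y k \<noteq> 0 then 1 else 0)"

definition Anc :: "nat \<Rightarrow> nat \<Rightarrow> nat set" where
  "Anc d i = {(2^d + i - 1) div 2^h | h. h \<le> d}"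

definition Lop :: "nat \<Rightarrow> nat \<Rightarrow> nat set" where
  "Lop d i = {k - 1 | k. k \<in> Anc d i \<and> odd k \<and> k \<ge> 3}"

definition treeM :: "nat \<Rightarrow> nat \<Rightarrow> nat \<Rightarrow> real" where
  "treeM d k i = (if k \<in> Anc d i then 1 else 0)"

definition rootsM :: "nat \<Rightarrow> nat \<Rightarrow> nat \<Rightarrow> real" where
  "rootsM d j k = (if j \<le> 2^d - 1 then (if k \<in> Lop d (j+1) then 1 else 0)
                   else (if k = 1 then 1 else 0))"

definition pairM :: "nat \<Rightarrow> nat \<Rightarrow> real" where
  "pairM k l = (if l = k then 1 else if k \<ge> 2 \<and> l = k - 1 then -1 else 0)"

definition sketchM :: "nat \<Rightarrow> nat \<Rightarrow> real" where
  "sketchM h k = real (((k - 1) div 2^(h - 1)) mod 2)"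

definition SPiRiT_inf :: "nat \<Rightarrow> (nat \<Rightarrow> real) \<Rightarrow> nat \<Rightarrow> real" where
  "SPiRiT_inf d x =
     mat_vec sketchM (2^d)
       (mat_vec pairM (2^d)
         (i_inf (mat_vec (rootsM d) (2 * 2^d - 1)
           (i_inf (mat_vec (treeM d) (2^d) x)))))"

definition first_pos :: "nat \<Rightarrow> (nat \<Rightarrow> real) \<Rightarrow> nat" where
  "first_pos m x = (if \<exists>i\<in>{1..m}. x i > 0 then (LEAST i. i \<in> {1..m} \<and> x i > 0) else 0)"

definition bin_rep :: "nat \<Rightarrow> nat \<Rightarrow> real" where
  "bin_rep n h = real ((n div 2^(h - 1)) mod 2)"

end

theory Submission imports Defs begin

lemma lvl: "h \<le> d \<Longrightarrow> n < 2^d \<Longrightarrow> (2^d + n) div 2^h = 2^(d-h) + (n::nat) div 2^h"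
proof -
  assume h: "h \<le> d"
  have "(2::nat)^d = 2^(d-h) * 2^h" using h by (simp add: power_add[symmetric])
  then show ?thesis by simp
qed

lemma key_bits: "(a::nat) < 2^d \<Longrightarrow> b < 2^d \<Longrightarrow> a < b \<longleftrightarrow> (\<exists>h<d. odd (b div 2^h) \<and> a div 2^h + 1 = b div 2^h)"
proof
  assume "\<exists>h<d. odd (b div 2^h) \<and> a div 2^h + 1 = b div 2^h"
  then obtain h where "a div 2^h + 1 = b div 2^h" by blast
  then have "a div 2^h < b div 2^h" by simp
  then show "a < b" by (meson div_le_mono not_le)
next
  show "a < 2 ^ d \<Longrightarrow> b < 2 ^ d \<Longrightarrow> a < b \<Longrightarrow> \<exists>h<d. odd (b div 2 ^ h) \<and> a div 2 ^ h + 1 = b div 2 ^ h"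
  proof (induction d arbitrary: a b)
    case 0 then show ?case by simp
  next
    case (Suc d)
    show ?case
    proof (cases "a div 2 = b div 2")
      case True
      then have "odd b" "a + 1 = b" using Suc.prems by presburger+
      then show ?thesis by auto
    next
      case False
      then have lt: "a div 2 < b div 2" using Suc.prems div_le_mono by (metis le_neq_implies_less less_imp_le)
      have "a div 2 < 2^d" "b div 2 < 2^d" using Suc.prems by auto
      from Suc.IH[OF this lt] obtain h where h: "h<d" "odd (b div 2 div 2 ^ h)" "a div 2 div 2 ^ h + 1 = b div 2 div 2 ^ h" by blast
      then show ?thesis
        by (intro exI[of _ "Suc h"]) (auto simp: div_mult2_eq)
    qed
  qed
qed

lemma pow_level: "(p::nat) < q \<Longrightarrow> 2^p \<le> (x::nat) \<Longrightarrow> x < 2^Suc p \<Longrightarrow> 2^q \<le> x \<Longrightarrow> False"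
proof -
  assume "p < q" "2^p \<le> x" "x < 2^Suc p" "2^q \<le> x"
  then have "(2::nat)^Suc p \<le> 2^q" by (intro power_increasing) auto
  then show False using \<open>x < 2^Suc p\<close> \<open>2^q \<le> x\<close> by linarith
qed

lemma lop_anc:
  assumes a: "(a::nat) < 2^d" and b: "b < 2^d"
  shows "(\<exists>h h'. h \<le> d \<and> h' \<le> d \<and> odd ((2^d + b) div 2^h) \<and> (2^d + b) div 2^h \<ge> 3
            \<and> (2^d + b) div 2^h - 1 = (2^d + a) div 2^h') \<longleftrightarrow> a < b"
proof
  assume "\<exists>h h'. h \<le> d \<and> h' \<le> d \<and> odd ((2^d + b) div 2^h) \<and> (2^d + b) div 2^h \<ge> 3
            \<and> (2^d + b) div 2^h - 1 = (2^d + a) div 2^h'"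
  then obtain h h' where hh: "h \<le> d" "h' \<le> d" "odd ((2^d + b) div 2^h)" "(2^d + b) div 2^h \<ge> 3"
     "(2^d + b) div 2^h - 1 = (2^d + a) div 2^h'" by blast
  have c: "(2^d + b) div 2^h = 2^(d-h) + b div 2^h" using lvl[OF hh(1) b] .
  have c': "(2^d + a) div 2^h' = 2^(d-h') + a div 2^h'" using lvl[OF hh(2) a] .
  have hd: "h < d"
  proof (rule ccontr)
    assume "\<not> h < d" then have "h = d" using hh by simp
    then show False using hh(4) c b by simp
  qed
  have bb: "b div 2^h < 2^(d-h)"
  proof -
    have "(2::nat)^d = 2^(d-h) * 2^h" using hd by (simp add: power_add[symmetric])
    then show ?thesis using b by (simp add: less_mult_imp_div_less)
  qed
  have ab: "a div 2^h' < 2^(d-h')"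
  proof -
    have "(2::nat)^d = 2^(d-h') * 2^h'" using hh(2) by (simp add: power_add[symmetric])
    then show ?thesis using a by (simp add: less_mult_imp_div_less)
  qed
  have ev: "even ((2::nat)^(d-h))" using hd by simp
  have "odd (b div 2^h)" using hh(3) c ev by simp
  then have bpos: "b div 2^h \<ge> 1" by (cases "b div 2^h") auto
  define x where "x = (2^d + b) div 2^h - 1"
  have x1: "2^(d-h) \<le> x" "x < 2^Suc (d-h)" using c bpos bb unfolding x_def by auto
  have x2: "2^(d-h') \<le> x" "x < 2^Suc (d-h')" using hh(5) c' ab unfolding x_def by auto
  have "d - h = d - h'"
  proof (rule ccontr)
    assume "d - h \<noteq> d - h'"
    then consider "d - h < d - h'" | "d - h' < d - h" by linarith
    then show False
    proof cases
      case 1 from pow_level[OF 1 x1 x2(1)] show False .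
    next
      case 2 from pow_level[OF 2 x2 x1(1)] show False .
    qed
  qed
  then have "h = h'" using hd hh(2) by simp
  then have "a div 2^h + 1 = b div 2^h" using hh(5) c c' bpos by simp
  then show "a < b" using key_bits[OF a b] hd \<open>odd (b div 2^h)\<close> by blast
next
  assume "a < b"
  then obtain h where h: "h < d" "odd (b div 2^h)" "a div 2^h + 1 = b div 2^h" using key_bits[OF a b] by blast
  have c: "(2^d + b) div 2^h = 2^(d-h) + b div 2^h" using lvl[OF _ b] h by simp
  have c': "(2^d + a) div 2^h = 2^(d-h) + a div 2^h" using lvl[OF _ a] h by simp
  have ev: "even ((2::nat)^(d-h))" using h by simp
  have "(2::nat)^1 \<le> 2^(d-h)" using h by (intro power_increasing) auto
  then have "(2::nat)^(d-h) \<ge> 2" by simp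
  then show "\<exists>h h'. h \<le> d \<and> h' \<le> d \<and> odd ((2^d + b) div 2^h) \<and> (2^d + b) div 2^h \<ge> 3
            \<and> (2^d + b) div 2^h - 1 = (2^d + a) div 2^h'"
    using h c c' ev by (intro exI[of _ h] exI[of _ h]) auto
qed

lemma anc_mem: "i \<ge> 1 \<Longrightarrow> k \<in> Anc d i \<longleftrightarrow> (\<exists>h\<le>d. k = (2^d + (i-1)) div 2^h)"
  unfolding Anc_def by auto

lemma lop_mem: "k \<in> Lop d (j+1) \<longleftrightarrow> (\<exists>h\<le>d. odd ((2^d + j) div 2^h) \<and> (2^d + j) div 2^h \<ge> 3 \<and> k = (2^d + j) div 2^h - 1)"
  unfolding Lop_def Anc_def by auto

lemma lop_anc2:
  assumes "i \<in> {1..2^d}" "j < 2^d"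
  shows "(\<exists>k. k \<in> Lop d (j+1) \<and> k \<in> Anc d i) \<longleftrightarrow> i \<le> j"
proof -
  have a: "i - 1 < 2^d" using assms by auto
  have i1: "1 \<le> i" using assms by simp
  have "(\<exists>k. k \<in> Lop d (j+1) \<and> k \<in> Anc d i) \<longleftrightarrow> (\<exists>h h'. h \<le> d \<and> h' \<le> d \<and> odd ((2^d + j) div 2^h) \<and> (2^d + j) div 2^h \<ge> 3
            \<and> (2^d + j) div 2^h - 1 = (2^d + (i-1)) div 2^h')"
    unfolding lop_mem anc_mem[OF i1] by blast
  also have "\<dots> \<longleftrightarrow> i - 1 < j" by (rule lop_anc[OF a assms(2)])
  finally show ?thesis using assms(1) by auto
qed

lemma anc_range: "i \<in> {1..2^d} \<Longrightarrow> k \<in> Anc d i \<Longrightarrow> 1 \<le> k \<and> k \<le> 2 * 2^d - 1"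
proof -
  assume i: "i \<in> {1..2^d}" and k: "k \<in> Anc d i"
  have i1: "1 \<le> i" using i by simp
  from k obtain h where h: "h \<le> d" "k = (2^d + (i-1)) div 2^h" unfolding anc_mem[OF i1] by blast
  have "i - 1 < 2^d" using i by auto
  then have kk: "k = 2^(d-h) + (i-1) div 2^h" using lvl[OF h(1)] h by simp
  have B: "(i-1) div 2^h \<le> i - 1" by simp
  have A: "(2::nat)^(d-h) \<le> 2^d" by (intro power_increasing) auto
  have A1: "(1::nat) \<le> 2^(d-h)" by simp
  have i2: "i \<le> 2^d" using i by simp
  show ?thesis using kk B A A1 i1 i2 by arith
qed

lemma one_anc: "i \<in> {1..2^d} \<Longrightarrow> 1 \<in> Anc d i"
proof -
  assume i: "i \<in> {1..2^d}"
  have "i - 1 < 2^d" using i by auto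
  then have e: "(1::nat) = (2^d + (i-1)) div 2^d" using lvl[of d d "i-1"] by simp
  have i1: "1 \<le> i" using i by simp
  show ?thesis unfolding anc_mem[OF i1] using e by blast
qed

lemma tree_step:
  assumes "\<forall>i\<in>{1..2^d}. x i \<ge> 0"
  shows "i_inf (mat_vec (treeM d) (2^d) x) k = (if \<exists>i\<in>{1..2^d}. k \<in> Anc d i \<and> x i > 0 then 1 else 0)"
proof -
  have nn: "\<forall>i\<in>{1..2^d}. treeM d k i * x i \<ge> 0" using assms by (auto simp: treeM_def)
  have "mat_vec (treeM d) (2^d) x k \<noteq> 0 \<longleftrightarrow> (\<exists>i\<in>{1..2^d}. treeM d k i * x i \<noteq> 0)"
  proof -
    have "(\<Sum>i\<in>{1..2^d}. treeM d k i * x i) = 0 \<longleftrightarrow> (\<forall>i\<in>{1..2^d}. treeM d k i * x i = 0)"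
      by (rule sum_nonneg_eq_0_iff) (use nn in auto)
    then show ?thesis unfolding mat_vec_def by blast
  qed
  also have "\<dots> \<longleftrightarrow> (\<exists>i\<in>{1..2^d}. k \<in> Anc d i \<and> x i > 0)"
  proof -
    have "\<forall>i\<in>{1..2^d}. (treeM d k i * x i \<noteq> 0) = (k \<in> Anc d i \<and> x i > 0)"
    proof
      fix i :: nat assume "i \<in> {1..2^d}"
      then have xi: "x i \<ge> 0" using assms by blast
      show "(treeM d k i * x i \<noteq> 0) = (k \<in> Anc d i \<and> x i > 0)"
        using xi by (cases "k \<in> Anc d i") (auto simp: treeM_def)
    qed
    then show ?thesis by blast
  qed
  finally show ?thesis unfolding i_inf_def by simp
qed

lemma sum_nz: "finite A \<Longrightarrow> \<forall>k\<in>A. f k \<ge> (0::real) \<Longrightarrow> (sum f A \<noteq> 0) = (\<exists>k\<in>A. f k \<noteq> 0)"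
  using sum_nonneg_eq_0_iff by blast

lemma roots_step:
  assumes nn: "\<forall>i\<in>{1..2^d}. x i \<ge> 0" and j: "j \<in> {1..2^d}"
  shows "i_inf (mat_vec (rootsM d) (2*2^d-1) (i_inf (mat_vec (treeM d) (2^d) x))) j
         = (if \<exists>i\<in>{1..j}. x i > 0 then 1 else 0)"
proof -
  define u where "u = i_inf (mat_vec (treeM d) (2^d) x)"
  have u: "\<And>k. u k = (if \<exists>i\<in>{1..2^d}. k \<in> Anc d i \<and> x i > 0 then 1 else 0)"
    using tree_step[OF nn] u_def by simp
  define N :: nat where "N = 2*2^d-1"
  have nnr: "\<forall>k\<in>{1..N}. rootsM d j k * u k \<ge> 0" by (auto simp: u rootsM_def)
  have S: "(mat_vec (rootsM d) N u j \<noteq> 0) = (\<exists>k\<in>{1..N}. rootsM d j k * u k \<noteq> 0)"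
    unfolding mat_vec_def by (rule sum_nz) (use nnr in auto)
  have uz: "\<And>k. (u k \<noteq> 0) = (\<exists>i\<in>{1..2^d}. k \<in> Anc d i \<and> x i > 0)" by (simp add: u)
  have "(mat_vec (rootsM d) N u j \<noteq> 0) = (\<exists>i\<in>{1..j}. x i > 0)"
  proof (cases "j < 2^d")
    case True
    then have "j \<le> 2^d - 1" by simp
    then have r: "\<And>k. rootsM d j k = (if k \<in> Lop d (j+1) then 1 else 0)" by (simp add: rootsM_def)
    have "(mat_vec (rootsM d) N u j \<noteq> 0) = (\<exists>k\<in>{1..N}. k \<in> Lop d (j+1) \<and> (\<exists>i\<in>{1..2^d}. k \<in> Anc d i \<and> x i > 0))"
      unfolding S r using uz by auto
    also have "\<dots> = (\<exists>i\<in>{1..2^d}. x i > 0 \<and> (\<exists>k. k \<in> Lop d (j+1) \<and> k \<in> Anc d i))"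
      using anc_range unfolding N_def by (meson atLeastAtMost_iff)
    also have "\<dots> = (\<exists>i\<in>{1..2^d}. x i > 0 \<and> i \<le> j)"
      using lop_anc2[OF _ True] by blast
    also have "\<dots> = (\<exists>i\<in>{1..j}. x i > 0)" using True by auto
    finally show ?thesis .
  next
    case False
    then have jm: "j = 2^d" using j by simp
    have p: "(0::nat) < 2^d" by simp
    have "\<not> j \<le> 2^d - 1" using jm p by linarith
    then have r: "\<And>k. rootsM d j k = (if k = 1 then 1 else 0)" by (simp add: rootsM_def)
    have "(1::nat) \<le> 2^d" by simp
    then have N1: "1 \<in> {1..N}" unfolding N_def atLeastAtMost_iff by linarith
    have "(mat_vec (rootsM d) N u j \<noteq> 0) = (u 1 \<noteq> 0)"
      unfolding S r using N1 by auto
    also have "\<dots> = (\<exists>i\<in>{1..2^d}. x i > 0)" unfolding uz using one_anc by blast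
    finally show ?thesis using jm by simp
  qed
  then have "i_inf (mat_vec (rootsM d) N u) j = (if \<exists>i\<in>{1..j}. x i > 0 then 1 else 0)"
    unfolding i_inf_def by simp
  then show ?thesis unfolding u_def N_def .
qed

lemma fp_props:
  assumes "\<exists>i\<in>{1..m}. x i > (0::real)"
  shows "first_pos m x \<in> {1..m}" "x (first_pos m x) > 0"
        "\<And>i. i \<in> {1..m} \<Longrightarrow> x i > 0 \<Longrightarrow> first_pos m x \<le> i"
proof -
  have e: "\<exists>i. i \<in> {1..m} \<and> x i > 0" using assms by blast
  have fpd: "first_pos m x = (LEAST i. i \<in> {1..m} \<and> x i > 0)" using assms by (simp add: first_pos_def)
  show "first_pos m x \<in> {1..m}" "x (first_pos m x) > 0" unfolding fpd using LeastI_ex[OF e] by auto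
  show "\<And>i. i \<in> {1..m} \<Longrightarrow> x i > 0 \<Longrightarrow> first_pos m x \<le> i" unfolding fpd by (rule Least_le) simp
qed

lemma fp_le: "first_pos m x \<le> m"
  using fp_props(1)[of m x] by (cases "\<exists>i\<in>{1..m}. x i > 0") (auto simp: first_pos_def)

lemma fp_iff: "j \<le> m \<Longrightarrow> (\<exists>i\<in>{1..j}. x i > 0) = (1 \<le> first_pos m x \<and> first_pos m x \<le> (j::nat))"
proof (cases "\<exists>i\<in>{1..m}. x i > 0")
  case True
  assume jm: "j \<le> m"
  note P = fp_props[OF True]
  show ?thesis
  proof
    assume "\<exists>i\<in>{1..j}. x i > 0"
    then obtain i where "i \<in> {1..j}" "x i > 0" by blast
    then show "1 \<le> first_pos m x \<and> first_pos m x \<le> j" using P(1) P(3)[of i] jm by auto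
  next
    assume "1 \<le> first_pos m x \<and> first_pos m x \<le> j"
    then show "\<exists>i\<in>{1..j}. x i > 0" using P(2) by auto
  qed
next
  case False
  assume jm: "j \<le> m"
  then show ?thesis using False by (auto simp: first_pos_def)
qed

lemma pair_step:
  assumes w: "\<forall>l\<in>{1..m}. w l = (if 1 \<le> p \<and> p \<le> l then 1 else (0::real))" and k: "k \<in> {1..m}"
  shows "mat_vec pairM m w k = (if p = k then 1 else 0)"
proof -
  have "mat_vec pairM m w k = (\<Sum>l\<in>{1..m}. (if l = k then w l else 0) - (if l = k - 1 then (if 2 \<le> k then w l else 0) else 0))"
    unfolding mat_vec_def by (rule sum.cong) (auto simp: pairM_def)
  also have "\<dots> = w k - (if 2 \<le> k then w (k-1) else 0)"
    using k by (simp add: sum_subtractf; linarith)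
  also have "\<dots> = (if p = k then 1 else 0)"
  proof -
    have wk: "w k = (if 1 \<le> p \<and> p \<le> k then 1 else 0)" using w k by blast
    have wk1: "2 \<le> k \<Longrightarrow> w (k-1) = (if 1 \<le> p \<and> p \<le> k-1 then 1 else 0)"
    proof -
      assume "2 \<le> k"
      then have "k - 1 \<in> {1..m}" using k by auto
      then show ?thesis using w by blast
    qed
    show ?thesis using wk wk1 k by auto
  qed
  finally show ?thesis .
qed

lemma sketch_step:
  assumes q: "\<forall>k\<in>{1..m}. q k = (if p = k then 1 else (0::real))" and pm: "p \<le> m"
  shows "mat_vec sketchM m q h = (if p \<ge> 1 then bin_rep (p - 1) h else 0)"
proof -
  have "mat_vec sketchM m q h = (\<Sum>k\<in>{1..m}. if k = p then sketchM h k else 0)"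
    unfolding mat_vec_def by (rule sum.cong) (auto simp: q)
  also have "\<dots> = (if p \<ge> 1 then sketchM h p else 0)" using pm by simp
  finally show ?thesis by (simp add: sketchM_def bin_rep_def)
qed

theorem theorem1:
  fixes d :: nat and x :: "nat \<Rightarrow> real"
  assumes "d \<ge> 1"
    and "\<forall>i\<in>{1..2^d}. x i \<ge> 0"
  shows "\<forall>h\<in>{1..d}.
           SPiRiT_inf d x h =
             (if first_pos (2^d) x \<ge> 1 then bin_rep (first_pos (2^d) x - 1) h else 0)"
proof
  fix h assume "h \<in> {1..d}"
  define p where "p = first_pos (2^d) x"
  define w where "w = i_inf (mat_vec (rootsM d) (2 * 2^d - 1) (i_inf (mat_vec (treeM d) (2^d) x)))"
  have w: "\<forall>l\<in>{1..2^d}. w l = (if 1 \<le> p \<and> p \<le> l then 1 else 0)"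
  proof
    fix l :: nat assume l: "l \<in> {1..2^d}"
    have "w l = (if \<exists>i\<in>{1..l}. x i > 0 then 1 else 0)" unfolding w_def by (rule roots_step[OF assms(2) l])
    also have "\<dots> = (if 1 \<le> p \<and> p \<le> l then 1 else 0)" unfolding p_def using fp_iff[of l "2^d" x] l by simp
    finally show "w l = (if 1 \<le> p \<and> p \<le> l then 1 else 0)" .
  qed
  have q: "\<forall>k\<in>{1..2^d}. mat_vec pairM (2^d) w k = (if p = k then 1 else 0)"
    using pair_step[OF w] by blast
  have "SPiRiT_inf d x h = mat_vec sketchM (2^d) (mat_vec pairM (2^d) w) h"
    unfolding SPiRiT_inf_def w_def ..
  also have "\<dots> = (if p \<ge> 1 then bin_rep (p - 1) h else 0)"
    by (rule sketch_step[OF q]) (simp add: p_def fp_le)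
  finally show "SPiRiT_inf d x h = (if first_pos (2^d) x \<ge> 1 then bin_rep (first_pos (2^d) x - 1) h else 0)"
    unfolding p_def .
qed

end
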